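(* Let $d\ge1$ and $\beta>0$. There is $\kappa\in(0,1)$ depending only on $d,\beta$ such that, for all sufficiently small $\varepsilon\in(0,1)$ (depending only on $d,\beta$), with $K$ and $\xi_i$ as in the context, the following holds: for any $k\in[1,K]_{\mathbb{Z}}$ and any $S=\{i_1<\dots<i_k\}\subset[1,K]_{\mathbb{Z}}$, $w_k:=\mathbb{P}[\xi_{i_1}=0,\dots,\xi_{i_k}=0]\le\kappa^k$.
   Context: The $\beta$-LRP metric $D$ on $\mathbb{R}^d$ comes with a random set $\mathcal{E}$ of long edges $\langle\bm u,\bm v\rangle$, $\bm u,\bm v\in\mathbb{R}^d$, forming a Poisson point process with intensity $\beta|\bm u-\bm v|^{-2d}$: for disjoint Borel sets $U,W$, the probability of at least one long edge between $U$ and $W$ is $1-\exp\{-\int_U\int_W\beta|\bm u-\bm v|^{-2d}d\bm u\,d\bm v\}$, with independence over disjoint regions. $\theta\in(0,1)$ is the distance exponent of critical LRP. $B_r(\bm 0)$ is the Euclidean ball, $\mathbb{A}_{r,s}=B_r(\bm0)\setminus B_s(\bm 0)$, and $D(U,W;V)$ the $D$-distance between $U,W$ restricted to $V$. Fix $c_{*,1},c_{*,2}>0$ depending only on $d,\beta$ with $\mathbb{P}[D(B_{1/2}(\bm0),\mathbb{A}_{1,7/8};B_1(\bm 0))\ge c_{*,1}]\ge c_{*,2}$. For $\varepsilon\in(0,1)$ set $K=\sqrt{\log(1/\varepsilon)}$, $N=(4^{-(1+1/\theta)}(c_{*,1}/\varepsilon)^{1/\theta})^{1/K}$, $M_1=(4\varepsilon/c_{*,1})^{1/\theta}$,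 $M_i=NM_{i-1}$ ($2\le i\le K$), $r_i=\sum_{k=1}^iM_k$. For $i\in[1,K]_{\mathbb{Z}}$, $E_{i,1}$ is the event that some long edge connects $B_{r_i-M_i/8}(\bm0)$ and $B_{r_i}(\bm 0)^c$, and $\xi_i=1$ if $E_{i,1}^c$ occurs, $\xi_i=0$ otherwise. *)

theory Defs
  imports "HOL-Probability.Probability"
begin

text \<open>Edges are stored as ordered pairs; an (unordered) long edge between U and W
  is a pair with one endpoint in U and the other in W.\<close>
definition edge_between :: "('a \<times> 'a) set \<Rightarrow> 'a set \<Rightarrow> 'a set \<Rightarrow> bool" where
  "edge_between F U W \<longleftrightarrow> (\<exists>(u,v)\<in>F. (u \<in> U \<and> v \<in> W) \<or> (u \<in> W \<and> v \<in> U))"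

definition lrp_intensity :: "real \<Rightarrow> 'a::euclidean_space set \<Rightarrow> 'a set \<Rightarrow> ennreal" where
  "lrp_intensity \<beta> U W =
     (\<integral>\<^sup>+ u. (\<integral>\<^sup>+ v. ennreal (\<beta> * norm (u - v) powr (- 2 * real DIM('a))) * indicator W v \<partial>lborel)
        * indicator U u \<partial>lborel)"

definition sym_rect :: "'a set \<times> 'a set \<Rightarrow> ('a \<times> 'a) set" where
  "sym_rect R = fst R \<times> snd R \<union> snd R \<times> fst R"

text \<open>A random set E of long edges on a probability space M forming the Poisson
  process of intensity beta |u-v|^(-2d): for disjoint Borel U, W the probability of
  at least one edge between U and W is 1 - exp(-intensity), with independence over
  disjoint regions.\<close>
definition long_edge_process ::
  "'w measure \<Rightarrow> real \<Rightarrow> ('w \<Rightarrow> ('a::euclidean_space \<times> 'a) set) \<Rightarrow> bool" where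
  "long_edge_process M \<beta> E \<longleftrightarrow>
     prob_space M \<and>
     (\<forall>U W. U \<in> sets borel \<longrightarrow> W \<in> sets borel \<longrightarrow>
        {\<omega> \<in> space M. edge_between (E \<omega>) U W} \<in> sets M) \<and>
     (\<forall>U W. U \<in> sets borel \<longrightarrow> W \<in> sets borel \<longrightarrow> U \<inter> W = {} \<longrightarrow>
        emeasure M {\<omega> \<in> space M. edge_between (E \<omega>) U W} =
          (if lrp_intensity \<beta> U W = \<infinity> then 1
           else ennreal (1 - exp (- enn2real (lrp_intensity \<beta> U W))))) \<and>
     (\<forall>(J::nat set) R. finite J \<longrightarrow>
        (\<forall>j\<in>J. fst (R j) \<in> sets borel \<and> snd (R j) \<in> sets borel \<and> fst (R j) \<inter> snd (R j) = {}) \<longrightarrow>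
        disjoint_family_on (\<lambda>j. sym_rect (R j)) J \<longrightarrow>
        prob_space.indep_events M
          (\<lambda>j. {\<omega> \<in> space M. edge_between (E \<omega>) (fst (R j)) (snd (R j))}) J)"

text \<open>Parameters of the lemma (theta = distance exponent, c1 = c_{*,1}).\<close>
definition Kpar :: "real \<Rightarrow> real" where
  "Kpar \<epsilon> = sqrt (ln (1 / \<epsilon>))"

definition Npar :: "real \<Rightarrow> real \<Rightarrow> real \<Rightarrow> real" where
  "Npar \<theta> c1 \<epsilon> = (4 powr (- (1 + 1 / \<theta>)) * (c1 / \<epsilon>) powr (1 / \<theta>)) powr (1 / Kpar \<epsilon>)"

definition Mpar :: "real \<Rightarrow> real \<Rightarrow> real \<Rightarrow> nat \<Rightarrow> real" where
  "Mpar \<theta> c1 \<epsilon> i = (4 * \<epsilon> / c1) powr (1 / \<theta>) * Npar \<theta> c1 \<epsilon> ^ (i - 1)"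

definition rpar :: "real \<Rightarrow> real \<Rightarrow> real \<Rightarrow> nat \<Rightarrow> real" where
  "rpar \<theta> c1 \<epsilon> i = (\<Sum>k = 1..i. Mpar \<theta> c1 \<epsilon> k)"

text \<open>The event E_{i,1} (i.e. xi_i = 0).\<close>
definition E1event :: "'w measure \<Rightarrow> ('w \<Rightarrow> ('a::euclidean_space \<times> 'a) set)
    \<Rightarrow> real \<Rightarrow> real \<Rightarrow> real \<Rightarrow> nat \<Rightarrow> 'w set" where
  "E1event M E \<theta> c1 \<epsilon> i = {\<omega> \<in> space M. edge_between (E \<omega>)
      (ball 0 (rpar \<theta> c1 \<epsilon> i - Mpar \<theta> c1 \<epsilon> i / 8)) (- ball 0 (rpar \<theta> c1 \<epsilon> i))}"

end

theory Submission
  imports Defs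
begin

lemma dyadic_exists:
  fixes t R :: real assumes "R > 0" "R \<le> t"
  shows "\<exists>k::nat. 2^k * R \<le> t \<and> t < 2^(Suc k) * R"
proof -
  define k where "k = nat \<lfloor>log 2 (t / R)\<rfloor>"
  have tr: "t / R \<ge> 1" using assms by simp
  have tp: "t / R > 0" using tr by simp
  have l0: "log 2 (t/R) \<ge> 0" using tr by simp
  have "real k \<le> log 2 (t/R)" unfolding k_def using l0 by linarith
  hence "2 powr real k \<le> t / R" using le_log_iff[of 2 "t/R" "real k"] tp by simp
  hence a: "2^k * R \<le> t" using assms by (simp add: powr_realpow field_simps)
  have "log 2 (t/R) < real k + 1" unfolding k_def using l0 by linarith
  hence "t / R < 2 powr (real k + 1)" using tp by (simp add: log_less_iff)
  hence b: "t < 2^(Suc k) * R" using assms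
    by (simp add: powr_realpow[symmetric] field_simps powr_add)
  show ?thesis using a b by blast
qed

lemma tail_alg: "(R::real) > 0 \<Longrightarrow> (2^k*R) powr (-2*real d) * (V * (2^(Suc k)*R)^d) = V * 2^d / R^d * (1/2^d)^k"
proof -
  assume R: "R > 0"
  define a :: real where "a = 2^(k*d)"
  define b where "b = R^d"
  define c :: real where "c = 2^d"
  have a0: "a > 0" "b > 0" "c > 0" unfolding a_def b_def c_def using R by auto
  have x0: "(2::real)^k*R > 0" using R by simp
  have 1: "(2^k*R) powr (-2*real d) = inverse ((2^k*R)^(2*d))"
    using powr_minus[of "2^k*R" "2*real d"] powr_realpow[OF x0, of "2*d"] by simp
  have e: "a = (2^k)^d" unfolding a_def by (simp add: power_mult)
  have 2: "((2::real)^k*R)^(2*d) = (a*b)^2"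
  proof -
    have "((2::real)^k*R)^(2*d) = (((2::real)^k*R)^d)^2" by (metis power_mult mult.commute)
    thus ?thesis unfolding e b_def by (simp add: power_mult_distrib)
  qed
  have 3: "((2::real)^(Suc k)*R)^d = c*a*b"
    unfolding e b_def c_def by (simp add: power_mult_distrib)
  have 4: "(1/(2::real)^d)^k = 1/a"
    unfolding a_def by (simp add: power_mult power_one_over mult.commute)
  show ?thesis unfolding 1 2 3 4 using a0
    by (simp add: c_def[symmetric] b_def[symmetric] field_simps power2_eq_square)
qed

lemma tail_bound:
  fixes R :: real assumes R: "R > 0"
  shows "(\<integral>\<^sup>+ v. ennreal (norm (v::'a::euclidean_space) powr (-2*real DIM('a))) * indicator (-ball 0 R) v \<partial>lborel)
     \<le> ennreal (unit_ball_vol (real DIM('a)) * 2^(DIM('a)+1) / R^DIM('a))"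
proof -
  define d where "d = DIM('a)"
  define V where "V = unit_ball_vol (real d)"
  have d1: "d \<ge> 1" unfolding d_def by (simp add: DIM_positive Suc_leI)
  have V0: "V \<ge> 0" unfolding V_def by simp
  define f where "f k v = ennreal ((2^k*R) powr (-2*real d)) * indicator (ball (0::'a) (2^(Suc k)*R)) v" for k v
  have pw: "ennreal (norm (v::'a) powr (-2*real d)) * indicator (-ball 0 R) v \<le> (\<Sum>k. f k v)" for v
  proof (cases "v \<in> ball 0 R")
    case True thus ?thesis by simp
  next
    case False
    hence "R \<le> norm v" by simp
    then obtain k where k: "2^k*R \<le> norm v" "norm v < 2^(Suc k)*R" using dyadic_exists R by blast
    have "norm v powr (-2*real d) \<le> (2^k*R) powr (-2*real d)" 
      by (rule powr_mono2') (use k R in auto)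
    hence "ennreal (norm v powr (-2*real d)) * indicator (-ball 0 R) v \<le> f k v"
      using False k by (simp add: f_def ennreal_leI)
    also have "\<dots> \<le> (\<Sum>k. f k v)" using ennreal_suminf_lessD le_less_linear by blast
    finally show ?thesis .
  qed
  have fk: "(\<integral>\<^sup>+ v. f k v \<partial>lborel) = ennreal (V * 2^d / R^d * (1/2^d)^k)" for k
  proof -
    have "(\<integral>\<^sup>+ v. f k v \<partial>lborel) = ennreal ((2^k*R) powr (-2*real d)) * emeasure lborel (ball (0::'a) (2^(Suc k)*R))"
      unfolding f_def by (simp add: nn_integral_cmult_indicator)
    also have "\<dots> = ennreal ((2^k*R) powr (-2*real d) * (V * (2^(Suc k)*R)^d))"
    proof -
      have e: "emeasure lborel (ball (0::'a) (2^(Suc k)*R)) = ennreal (V * (2^(Suc k)*R)^d)"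
        unfolding V_def d_def by (rule emeasure_ball) (use R in simp)
      have n1: "0 \<le> (2^k*R) powr (-2*real d)" by simp
      have n2: "0 \<le> V * (2^(Suc k)*R)^d" using V0 R by simp
      show ?thesis unfolding e by (rule ennreal_mult[OF n1 n2, symmetric])
    qed
    also have "(2^k*R) powr (-2*real d) * (V * (2^(Suc k)*R)^d) = V * 2^d / R^d * (1/2^d)^k"
      using R by (rule tail_alg)
    finally show ?thesis .
  qed
  have "(\<integral>\<^sup>+ v. ennreal (norm (v::'a) powr (-2*real d)) * indicator (-ball 0 R) v \<partial>lborel) \<le> (\<integral>\<^sup>+ v. (\<Sum>k. f k v) \<partial>lborel)"
    by (rule nn_integral_mono, rule pw)
  also have "\<dots> = (\<Sum>k. \<integral>\<^sup>+ v. f k v \<partial>lborel)"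
    by (rule nn_integral_suminf) (unfold f_def, intro borel_measurable_times_ennreal borel_measurable_const borel_measurable_indicator, auto)
  also have "(\<Sum>k. \<integral>\<^sup>+ v. f k v \<partial>lborel) = (\<Sum>k. ennreal (V * 2^d / R^d * (1/2^d)^k))"
    using fk by simp
  also have "(\<Sum>k. ennreal (V * 2^d / R^d * (1/2^d)^k)) = ennreal (V*2^d/R^d * (1/(1 - 1/2^d)))"
  proof (rule suminf_ennreal_eq)
    show "(\<lambda>k. V * 2^d / R^d * (1/2^d)^k) sums (V*2^d/R^d * (1/(1 - 1/2^d)))"
      by (rule sums_mult, rule geometric_sums) (use d1 in simp)
  qed (use V0 R in simp)
  also have "\<dots> \<le> ennreal (V*2^(d+1)/R^d)"
  proof (rule ennreal_leI)
    have "(2::real)^d \<ge> 2" using d1 by (metis power_one_right power_increasing one_le_numeral)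
    hence "1/(1 - 1/2^d) \<le> (2::real)" by (simp add: field_simps)
    hence "V*2^d/R^d * (1/(1 - 1/2^d)) \<le> V*2^d/R^d * 2" using V0 R by (intro mult_left_mono) auto
    thus "V*2^d/R^d * (1/(1 - 1/2^d)) \<le> V*2^(d+1)/R^d" by (simp add: algebra_simps)
  qed
  finally show ?thesis unfolding d_def V_def by simp
qed

lemma intensity_bound:
  fixes U W :: "'a::euclidean_space set" and \<beta> t R a :: real
  assumes \<beta>: "\<beta> > 0" and t: "0 \<le> t" "t < 1" and R: "R > 0" and a: "0 \<le> a" "a \<le> t*R"
    and U: "U \<subseteq> ball 0 a" and W: "W \<subseteq> -ball 0 R"
  shows "lrp_intensity \<beta> U W \<le> ennreal (\<beta> * (1-t) powr (-2*real DIM('a)) *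
           (unit_ball_vol (real DIM('a)) * 2^(DIM('a)+1) / R^DIM('a)) * (unit_ball_vol (real DIM('a)) * a^DIM('a)))"
proof -
  define c where "c = \<beta> * (1-t) powr (-2*real DIM('a))"
  define T where "T = unit_ball_vol (real DIM('a)) * 2^(DIM('a)+1) / R^DIM('a)"
  have c0: "c \<ge> 0" unfolding c_def using \<beta> by simp
  have T0: "T \<ge> 0" unfolding T_def using R by simp
  have inner: "(\<integral>\<^sup>+ v. ennreal (\<beta> * norm (u - v) powr (-2*real DIM('a))) * indicator W v \<partial>lborel) \<le> ennreal (c * T)"
    if u: "u \<in> ball 0 a" for u :: 'a
  proof -
    have "(\<integral>\<^sup>+ v. ennreal (\<beta> * norm (u - v) powr (-2*real DIM('a))) * indicator W v \<partial>lborel)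
       \<le> (\<integral>\<^sup>+ v. ennreal c * (ennreal (norm (v::'a) powr (-2*real DIM('a))) * indicator (-ball 0 R) v) \<partial>lborel)"
    proof (rule nn_integral_mono)
      fix v :: 'a
      show "ennreal (\<beta> * norm (u - v) powr (-2*real DIM('a))) * indicator W v
          \<le> ennreal c * (ennreal (norm v powr (-2*real DIM('a))) * indicator (-ball 0 R) v)"
      proof (cases "v \<in> W")
        case False then show ?thesis by simp
      next
        case True
        then have nv: "R \<le> norm v" using W by auto
        have nu: "norm u < a" using u by simp
        have "norm v - norm u \<le> norm (u - v)" by (metis norm_minus_commute norm_triangle_ineq2)
        moreover have "t * norm v \<ge> t * R" using t nv by (simp add: mult_left_mono)
        ultimately have le: "(1-t) * norm v \<le> norm (u - v)" using nu a by (simp add: algebra_simps)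
        have pos: "(1-t) * norm v > 0" using t nv R by (intro mult_pos_pos) auto
        have "norm (u-v) powr (-2*real DIM('a)) \<le> ((1-t) * norm v) powr (-2*real DIM('a))"
          by (rule powr_mono2') (use le pos in auto)
        also have "\<dots> = (1-t) powr (-2*real DIM('a)) * norm v powr (-2*real DIM('a))"
          using t by (simp add: powr_mult)
        finally have "\<beta> * norm (u-v) powr (-2*real DIM('a)) \<le> c * norm v powr (-2*real DIM('a))"
          unfolding c_def using \<beta> by (simp add: mult.assoc)
        then show ?thesis using True nv c0 by (simp add: ennreal_mult[symmetric] ennreal_leI)
      qed
    qed
    also have "\<dots> = ennreal c * (\<integral>\<^sup>+ v. ennreal (norm (v::'a) powr (-2*real DIM('a))) * indicator (-ball 0 R) v \<partial>lborel)"
      by (rule nn_integral_cmult) measurable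
    also have "\<dots> \<le> ennreal c * ennreal T"
      unfolding T_def by (rule mult_left_mono[OF tail_bound[OF R]]) simp
    also have "\<dots> = ennreal (c * T)" using c0 T0 by (simp add: ennreal_mult)
    finally show ?thesis .
  qed
  have "lrp_intensity \<beta> U W \<le> (\<integral>\<^sup>+ u. ennreal (c*T) * indicator (ball 0 a) (u::'a) \<partial>lborel)"
    unfolding lrp_intensity_def
  proof (rule nn_integral_mono)
    fix u :: 'a
    show "(\<integral>\<^sup>+ v. ennreal (\<beta> * norm (u - v) powr (-2*real DIM('a))) * indicator W v \<partial>lborel) * indicator U u
        \<le> ennreal (c*T) * indicator (ball 0 a) u"
    proof (cases "u \<in> U")
      case True then show ?thesis using inner[of u] U by auto
    qed simp
  qed
  also have "\<dots> = ennreal (c*T) * emeasure lborel (ball (0::'a) a)"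
    by (simp add: nn_integral_cmult_indicator)
  also have "\<dots> = ennreal (c*T) * ennreal (unit_ball_vol (real DIM('a)) * a^DIM('a))"
    by (subst emeasure_ball) (use a in auto)
  also have "\<dots> = ennreal (c*T*(unit_ball_vol (real DIM('a)) * a^DIM('a)))"
    using c0 T0 a by (simp add: ennreal_mult)
  finally show ?thesis unfolding c_def T_def .
qed

lemma edge_UN:
  "edge_between F (\<Union>x\<in>X. U x) (\<Union>y\<in>Y. V y) \<longleftrightarrow> (\<exists>x\<in>X. \<exists>y\<in>Y. edge_between F (U x) (V y))"
  unfolding edge_between_def by blast

lemma edge_sym: "edge_between F U W = edge_between F W U"
  unfolding edge_between_def by blast

lemma edge_mono: "U \<subseteq> U' \<Longrightarrow> W \<subseteq> W' \<Longrightarrow> edge_between F U W \<Longrightarrow> edge_between F U' W'"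
  unfolding edge_between_def by blast

lemma indep_groups:
  assumes P: "prob_space M" and I: "prob_space.indep_events M A J"
    and J: "J1 \<subseteq> J" "J2 \<subseteq> J" "J1 \<inter> J2 = {}"
    and Z: "Z \<in> sigma_sets (space M) (A ` J1)" and Y: "Y \<in> sigma_sets (space M) (A ` J2)"
  shows "measure M (Z \<inter> Y) = measure M Z * measure M Y"
proof -
  interpret prob_space M by (rule P)
  define I' where "I' b = (if b then J1 else J2)" for b
  have "indep_sets (\<lambda>i. {A i}) J" using I by (simp add: indep_events_def_alt)
  hence i1: "indep_sets (\<lambda>i. {A i}) (\<Union>b\<in>UNIV. I' b)"
    by (rule indep_sets_mono_index[rotated]) (use J in \<open>auto simp: I'_def\<close>)
  have i2': "indep_sets (\<lambda>b. sigma_sets (space M) (\<Union>i\<in>I' b. {A i})) UNIV"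
  proof (rule indep_sets_collect_sigma[OF i1])
    show "Int_stable {A i}" for i by (auto simp: Int_stable_def)
    show "disjoint_family_on I' UNIV" using J by (auto simp: disjoint_family_on_def I'_def)
  qed
  have i2: "indep_sets (\<lambda>b. sigma_sets (space M) (A ` I' b)) UNIV"
  proof -
    have "(\<Union>i\<in>I' b. {A i}) = A ` I' b" for b by auto
    thus ?thesis using i2' by simp
  qed
  have "prob (\<Inter>b\<in>UNIV. (if b then Z else Y)) = (\<Prod>b\<in>UNIV. prob (if b then Z else Y))"
    by (rule indep_setsD[OF i2]) (use Z Y in \<open>auto simp: I'_def\<close>)
  thus ?thesis by (simp add: UNIV_bool Int_commute)
qed

lemma prob_edge_le:
  assumes L: "long_edge_process M \<beta> E" and U: "U \<in> sets borel" "W \<in> sets borel" "U \<inter> W = {}"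
    and I: "lrp_intensity \<beta> U W \<le> ennreal x" and x: "x \<ge> 0"
  shows "measure M {\<omega>\<in>space M. edge_between (E \<omega>) U W} \<le> 1 - exp (-x)"
proof -
  have fin: "lrp_intensity \<beta> U W \<noteq> \<infinity>" using I neq_top_trans[of "ennreal x" "lrp_intensity \<beta> U W"] by simp
  have em: "emeasure M {\<omega>\<in>space M. edge_between (E \<omega>) U W} = ennreal (1 - exp (- enn2real (lrp_intensity \<beta> U W)))"
    using L U fin unfolding long_edge_process_def by auto
  have le: "enn2real (lrp_intensity \<beta> U W) \<le> x" by (rule enn2real_leI[OF x I])
  have nn: "0 \<le> 1 - exp (- enn2real (lrp_intensity \<beta> U W))" by simp
  have "measure M {\<omega>\<in>space M. edge_between (E \<omega>) U W} = 1 - exp (- enn2real (lrp_intensity \<beta> U W))"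
    unfolding measure_def em using nn by simp
  also have "\<dots> \<le> 1 - exp (-x)" using le by simp
  finally show ?thesis .
qed

lemma one_minus_exp_le: "(x::real) \<ge> 0 \<Longrightarrow> 1 - exp (-x) \<le> x"
  using exp_ge_add_one_self[of "-x"] by simp

lemma geo_tail: "0 \<le> (x::real) \<Longrightarrow> x \<le> 1/2 \<Longrightarrow> (\<Sum>j\<in>{1..<m}. x^(m-j)) \<le> 2*x"
proof (induction m)
  case 0 then show ?case by simp
next
  case (Suc m)
  show ?case
  proof (cases "m = 0")
    case True then show ?thesis using Suc.prems by simp
  next
    case False
    have split: "{1..<Suc m} = insert m {1..<m}" using False by auto
    have "(\<Sum>j\<in>{1..<Suc m}. x^(Suc m-j)) = x^(Suc m - m) + (\<Sum>j\<in>{1..<m}. x^(Suc m-j))"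
      unfolding split by simp
    also have "(\<Sum>j\<in>{1..<m}. x^(Suc m-j)) = x * (\<Sum>j\<in>{1..<m}. x^(m-j))"
      unfolding sum_distrib_left by (rule sum.cong) (auto simp: Suc_diff_le)
    also have "x^(Suc m - m) = x" by simp
    finally have "(\<Sum>j\<in>{1..<Suc m}. x^(Suc m-j)) = x + x * (\<Sum>j\<in>{1..<m}. x^(m-j))" .
    also have "\<dots> \<le> x + x * (2*x)" using Suc by (intro add_left_mono mult_left_mono) auto
    also have "\<dots> \<le> 2*x" using Suc.prems mult_left_mono[of "2*x" 1 x] by (simp add: algebra_simps)
    finally show ?thesis .
  qed
qed

lemma sum_bound:
  fixes \<kappa> q A N :: real and p :: "nat \<Rightarrow> real" and c :: "nat \<Rightarrow> nat"
  assumes k: "0<\<kappa>" "\<kappa><1" and m: "1 \<le> m" and pm: "p m \<le> q"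
    and pj: "\<And>j. 1 \<le> j \<Longrightarrow> j < m \<Longrightarrow> p j \<le> A / N^(m-j)"
    and p0: "\<And>j. 0 \<le> p j"
    and cs: "\<And>j. 1 \<le> j \<Longrightarrow> j \<le> m \<Longrightarrow> s \<le> c j + (m+1-j)"
    and Nk: "N*\<kappa> \<ge> 2" and main: "q/\<kappa> + 2*A/(N*\<kappa>^2) \<le> 1" and A: "A \<ge> 0" and N: "N > 0"
  shows "(\<Sum>j\<in>{1..m}. p j * \<kappa>^(c j)) \<le> \<kappa>^s"
proof -
  have kp: "\<kappa>^(c j) \<le> \<kappa>^s / \<kappa>^(m+1-j)" if "1 \<le> j" "j \<le> m" for j
  proof -
    have "\<kappa>^s \<ge> \<kappa>^(c j + (m+1-j))" by (rule power_decreasing) (use cs[OF that] k in auto)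
    hence "\<kappa>^s \<ge> \<kappa>^(c j) * \<kappa>^(m+1-j)" by (simp add: power_add)
    thus ?thesis using k by (simp add: field_simps)
  qed
  define x where "x = 1/(N*\<kappa>)"
  have x0: "0 \<le> x" "x \<le> 1/2" unfolding x_def using Nk k N by (auto simp: field_simps)
  have split: "{1..m} = insert m {1..<m}" using m by auto
  have t1: "p m * \<kappa>^(c m) \<le> q * (\<kappa>^s / \<kappa>)"
  proof -
    have "p m * \<kappa>^(c m) \<le> p m * (\<kappa>^s / \<kappa>)" using kp[of m] m p0[of m] by (intro mult_left_mono) auto
    also have "\<dots> \<le> q * (\<kappa>^s / \<kappa>)" using pm k by (intro mult_right_mono) auto
    finally show ?thesis .
  qed
  have t2: "p j * \<kappa>^(c j) \<le> \<kappa>^s * (A/\<kappa>) * x^(m-j)" if j: "1 \<le> j" "j < m" for j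
  proof -
    have "p j * \<kappa>^(c j) \<le> (A / N^(m-j)) * (\<kappa>^s / \<kappa>^(m+1-j))"
      using kp[of j] j pj[OF j] p0[of j] k by (intro mult_mono) auto
    also have "\<kappa>^(m+1-j) = \<kappa> * \<kappa>^(m-j)" using j by (simp add: Suc_diff_le)
    also have "(A / N^(m-j)) * (\<kappa>^s / (\<kappa> * \<kappa>^(m-j))) = \<kappa>^s * (A/\<kappa>) * x^(m-j)"
      unfolding x_def using k N by (simp add: field_simps power_mult_distrib)
    finally show ?thesis .
  qed
  have "(\<Sum>j\<in>{1..m}. p j * \<kappa>^(c j)) = p m * \<kappa>^(c m) + (\<Sum>j\<in>{1..<m}. p j * \<kappa>^(c j))"
    unfolding split by simp
  also have "\<dots> \<le> q * (\<kappa>^s / \<kappa>) + (\<Sum>j\<in>{1..<m}. \<kappa>^s * (A/\<kappa>) * x^(m-j))"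
    using t1 t2 by (intro add_mono sum_mono) auto
  also have "(\<Sum>j\<in>{1..<m}. \<kappa>^s * (A/\<kappa>) * x^(m-j)) = \<kappa>^s * (A/\<kappa>) * (\<Sum>j\<in>{1..<m}. x^(m-j))"
    by (simp add: sum_distrib_left)
  also have "\<dots> \<le> \<kappa>^s * (A/\<kappa>) * (2*x)"
    using geo_tail[OF x0] k A by (intro mult_left_mono) auto
  also have "q * (\<kappa>^s / \<kappa>) + \<kappa>^s * (A/\<kappa>) * (2*x) = \<kappa>^s * (q/\<kappa> + 2*A/(N*\<kappa>^2))"
    unfolding x_def using k N by (simp add: field_simps power2_eq_square)
  also have "\<dots> \<le> \<kappa>^s * 1" using main k by (intro mult_left_mono) auto
  finally show ?thesis by simp
qed

definition Cst :: "real \<Rightarrow> nat \<Rightarrow> real \<Rightarrow> real" where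
  "Cst \<beta> d t = \<beta> * (1-t) powr (-2*real d) * unit_ball_vol (real d)^2 * 2^(d+1)"

lemma Cst_nonneg: "\<beta> > 0 \<Longrightarrow> 0 \<le> Cst \<beta> d t"
  unfolding Cst_def by simp

lemma intensity_bound2:
  fixes U W :: "'a::euclidean_space set" and \<beta> t R a :: real
  assumes \<beta>: "\<beta> > 0" and t: "0 \<le> t" "t < 1" and R: "R > 0" and a: "0 \<le> a" "a \<le> t*R"
    and U: "U \<subseteq> ball 0 a" and W: "W \<subseteq> -ball 0 R"
  shows "lrp_intensity \<beta> U W \<le> ennreal (Cst \<beta> DIM('a) t * (a/R)^DIM('a))"
proof -
  have "\<beta> * (1-t) powr (-2*real DIM('a)) *
           (unit_ball_vol (real DIM('a)) * 2^(DIM('a)+1) / R^DIM('a)) * (unit_ball_vol (real DIM('a)) * a^DIM('a))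
        = Cst \<beta> DIM('a) t * (a/R)^DIM('a)"
    by (simp add: Cst_def power_divide power2_eq_square mult_ac)
  thus ?thesis using intensity_bound[OF assms] by simp
qed

locale lrp_setup =
  fixes M :: "'w measure" and E :: "'w \<Rightarrow> ('a::euclidean_space \<times> 'a) set" and \<beta> :: real
    and Mm r :: "nat \<Rightarrow> real" and N \<kappa> :: real
  assumes LEP: "long_edge_process M \<beta> E" and \<beta>: "\<beta> > 0"
    and Mpos: "\<And>i. 1 \<le> i \<Longrightarrow> Mm i > 0"
    and r0: "r 0 = 0" and rSuc: "\<And>i. r (Suc i) = r i + Mm (Suc i)"
    and MSuc: "\<And>i. 1 \<le> i \<Longrightarrow> Mm (Suc i) = N * Mm i"
    and N4: "N \<ge> 4"
    and k: "0 < \<kappa>" "\<kappa> < 1"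
    and main: "(1 - exp (- Cst \<beta> DIM('a) (15/16)))/\<kappa> + 2*(2*Cst \<beta> DIM('a) (1/2))/(N*\<kappa>^2) \<le> 1"
    and Nk: "N*\<kappa> \<ge> 2"
begin

definition "a i = r i - Mm i / 8"
definition "Ev i = {\<omega> \<in> space M. edge_between (E \<omega>) (ball 0 (a i)) (-ball 0 (r i))}"
definition "b k = (if even k then r (k div 2) else a (Suc k div 2))"

lemma r_step: "r i \<le> r (Suc i)" using rSuc[of i] Mpos[of "Suc i"] by simp

lemma r_mono: "i \<le> j \<Longrightarrow> r i \<le> r j"
  by (rule lift_Suc_mono_le[of r]) (use r_step in auto)

lemma r_nonneg: "r i \<ge> 0" using r_mono[of 0 i] r0 by simp

lemma r_prev: "1 \<le> i \<Longrightarrow> r i = r (i-1) + Mm i"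
  using rSuc[of "i-1"] by simp

lemma a_bounds: "1 \<le> i \<Longrightarrow> r (i-1) \<le> a i \<and> a i \<le> r i"
  using r_prev[of i] Mpos[of i] unfolding a_def by auto

lemma b_step: "b k \<le> b (Suc k)"
proof (cases "even k")
  case True
  then obtain i where i: "k = 2*i" by blast
  have "b k = r i" "b (Suc k) = a (Suc i)" unfolding b_def i by auto
  thus ?thesis using a_bounds[of "Suc i"] by simp
next
  case False
  then obtain i where i: "k = 2*i+1" using oddE by blast
  have "b k = a (Suc i)" "b (Suc k) = r (Suc i)" unfolding b_def i by auto
  thus ?thesis using a_bounds[of "Suc i"] by simp
qed

lemma b_mono: "k \<le> k' \<Longrightarrow> b k \<le> b k'"
  by (rule lift_Suc_mono_le[of b]) (use b_step in auto)

lemma b_even: "b (2*i) = r i" unfolding b_def by simp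
lemma b_odd: "1 \<le> i \<Longrightarrow> b (2*i - 1) = a i"
proof -
  assume "1 \<le> i"
  then obtain j where j: "i = Suc j" by (cases i) auto
  have "2*i - 1 = 2*j+1" using j by simp
  thus ?thesis unfolding b_def j by simp
qed
lemma b0: "b 0 = 0" using b_even[of 0] r0 by simp

lemma r_le_2M: "1 \<le> i \<Longrightarrow> r i \<le> 2 * Mm i"
proof (induction i rule: nat_induct_at_least)
  case base then show ?case using rSuc[of 0] r0 Mpos[of 1] by simp
next
  case (Suc i)
  have "r (Suc i) = r i + Mm (Suc i)" by (rule rSuc)
  also have "\<dots> \<le> 2 * Mm i + Mm (Suc i)" using Suc by simp
  also have "2 * Mm i \<le> Mm (Suc i)" using MSuc[OF Suc.hyps] Mpos[OF Suc.hyps] N4 by simp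
  finally show ?case by simp
qed

lemma M_pow: assumes "1 \<le> j" "j \<le> m" shows "Mm m = N^(m-j) * Mm j"
  using assms(2)
proof (induction m rule: dec_induct)
  case base then show ?case by simp
next
  case (step m)
  have "Mm (Suc m) = N * Mm m" using MSuc step assms by simp
  also have "\<dots> = N^(Suc m - j) * Mm j" using step by (simp add: Suc_diff_le)
  finally show ?case .
qed

lemma M_le_r: "1 \<le> i \<Longrightarrow> Mm i \<le> r i"
  using r_prev[of i] r_nonneg[of "i-1"] by simp

lemma r_pos: "1 \<le> i \<Longrightarrow> r i > 0"
  using M_le_r[of i] Mpos[of i] by simp

lemma ratio: assumes "1 \<le> j" "j < m" shows "r j / r m \<le> 2 / N^(m-j)"
proof -
  have A1: "r j \<le> 2 * Mm j" using r_le_2M assms by simp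
  have A2: "N^(m-j) * Mm j \<le> r m" using M_pow[of j m] M_le_r[of m] assms by simp
  have p1: "Mm j > 0" using Mpos assms by simp
  have p2: "N^(m-j) > 0" using N4 by simp
  have p3: "r m > 0" using r_pos[of m] assms by simp
  have h1: "r j / r m \<le> 2 * Mm j / r m" using A1 p3 by (simp add: divide_right_mono)
  have h2: "2 * Mm j / r m \<le> 2 * Mm j / (N^(m-j) * Mm j)"
    by (rule divide_left_mono[OF A2]) (use p1 p2 p3 in auto)
  have h3: "2 * Mm j / (N^(m-j) * Mm j) = 2 / N^(m-j)" using p1 by simp
  show ?thesis using h1 h2 h3 by linarith
qed

lemma rj_half: assumes "1 \<le> j" "j < m" shows "r j \<le> (1/2) * r m"
proof -
  have "N^1 \<le> N^(m-j)" by (rule power_increasing) (use assms N4 in auto)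
  hence "4 \<le> N^(m-j)" using N4 by simp
  hence "2 / N^(m-j) \<le> 1/2" using N4 by (simp add: field_simps)
  hence "r j / r m \<le> 1/2" using ratio[OF assms] by linarith
  thus ?thesis using r_pos[of m] assms by (simp add: field_simps)
qed

lemma am: "1 \<le> m \<Longrightarrow> a m \<le> (15/16) * r m"
  using r_le_2M[of m] unfolding a_def by simp

end

context lrp_setup begin

definition P :: "nat \<Rightarrow> nat \<Rightarrow> 'a set" where
  "P L x = (if x < L then ball 0 (b (Suc x)) - ball 0 (b x) else -ball 0 (b L))"

lemma P_borel: "P L x \<in> sets borel"
  unfolding P_def by (auto intro!: sets.Diff sets.compl_sets)

lemma P_sub: "x < L \<Longrightarrow> P L x \<subseteq> ball 0 (b (Suc x))"
  unfolding P_def by auto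

lemma P_uniq_lt: assumes "v \<in> P L x" "v \<in> P L y" "x < y" "y \<le> L" shows False
proof -
  have "norm v < b (Suc x)" using assms(1,3,4) unfolding P_def by auto
  moreover have "b (Suc x) \<le> b y" using assms(3) by (intro b_mono) simp
  moreover have "b y \<le> norm v" using assms(2,4) unfolding P_def by (auto split: if_splits)
  ultimately show False by simp
qed

lemma P_uniq: "v \<in> P L x \<Longrightarrow> v \<in> P L y \<Longrightarrow> x \<le> L \<Longrightarrow> y \<le> L \<Longrightarrow> x = y"
  using P_uniq_lt[of v L x y] P_uniq_lt[of v L y x] by (cases "x < y"; cases "y < x") auto

lemma shell_exists:
  "b k0 \<le> t \<Longrightarrow> t < b k1 \<Longrightarrow> \<exists>x. k0 \<le> x \<and> x < k1 \<and> b x \<le> t \<and> t < b (Suc x)"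
proof (induction k1)
  case 0
  have "b k0 \<ge> b 0" by (rule b_mono) simp
  then show ?case using 0 by simp
next
  case (Suc k1)
  show ?case
  proof (cases "t < b k1")
    case True then show ?thesis using Suc by (metis less_SucI)
  next
    case False
    have "k0 \<le> k1"
    proof (rule ccontr)
      assume "\<not> k0 \<le> k1"
      hence "b (Suc k1) \<le> b k0" by (intro b_mono) simp
      thus False using Suc.prems by simp
    qed
    thus ?thesis using False Suc.prems by (intro exI[of _ k1]) auto
  qed
qed

lemma ball_union: assumes "k \<le> L" shows "ball 0 (b k) = (\<Union>x\<in>{..<k}. P L x)"
proof
  show "(\<Union>x\<in>{..<k}. P L x) \<subseteq> ball 0 (b k)"
  proof (intro UN_least)
    fix x assume "x \<in> {..<k}"
    hence "x < L" "Suc x \<le> k" using assms by auto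
    thus "P L x \<subseteq> ball 0 (b k)" using P_sub[of x L] b_mono[of "Suc x" k] by auto
  qed
  show "ball 0 (b k) \<subseteq> (\<Union>x\<in>{..<k}. P L x)"
  proof
    fix v :: 'a assume "v \<in> ball 0 (b k)"
    hence "norm v < b k" by simp
    moreover have "b 0 \<le> norm v" using b0 by simp
    ultimately obtain x where x: "x < k" "b x \<le> norm v" "norm v < b (Suc x)"
      using shell_exists[of 0 "norm v" k] by auto
    hence "v \<in> P L x" using assms unfolding P_def by auto
    thus "v \<in> (\<Union>x\<in>{..<k}. P L x)" using x by auto
  qed
qed

lemma cball_union: assumes "k \<le> L" shows "-ball 0 (b k) = (\<Union>x\<in>{k..L}. P L x)"
proof
  show "(\<Union>x\<in>{k..L}. P L x) \<subseteq> -ball 0 (b k)"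
  proof (intro UN_least)
    fix x assume x: "x \<in> {k..L}"
    show "P L x \<subseteq> -ball 0 (b k)"
    proof (cases "x < L")
      case True
      have "b k \<le> b x" using x by (intro b_mono) simp
      thus ?thesis using True unfolding P_def by auto
    next
      case False
      have "b k \<le> b L" using assms by (intro b_mono) simp
      thus ?thesis using False unfolding P_def by auto
    qed
  qed
  show "-ball 0 (b k) \<subseteq> (\<Union>x\<in>{k..L}. P L x)"
  proof
    fix v :: 'a assume "v \<in> -ball 0 (b k)"
    hence v: "b k \<le> norm v" by simp
    show "v \<in> (\<Union>x\<in>{k..L}. P L x)"
    proof (cases "b L \<le> norm v")
      case True
      hence "v \<in> P L L" unfolding P_def by simp
      thus ?thesis using assms by auto
    next
      case False
      then obtain x where x: "k \<le> x" "x < L" "b x \<le> norm v" "norm v < b (Suc x)"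
        using shell_exists[of k "norm v" L] v by auto
      hence "v \<in> P L x" unfolding P_def by auto
      thus ?thesis using x by auto
    qed
  qed
qed

definition A :: "nat \<Rightarrow> nat \<Rightarrow> 'w set" where
  "A L n = {\<omega>\<in>space M. edge_between (E \<omega>) (P L (fst (prod_decode n))) (P L (snd (prod_decode n)))}"

definition Jset :: "nat \<Rightarrow> nat set" where
  "Jset L = prod_encode ` {(x,y). x < y \<and> y \<le> L}"

lemma prob: "prob_space M" using LEP unfolding long_edge_process_def by simp

lemma edge_meas: "U \<in> sets borel \<Longrightarrow> W \<in> sets borel \<Longrightarrow> {\<omega>\<in>space M. edge_between (E \<omega>) U W} \<in> sets M"
  using LEP unfolding long_edge_process_def by simp

lemma A_indep: "prob_space.indep_events M (A L) (Jset L)"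
proof -
  define R where "R n = (P L (fst (prod_decode n)), P L (snd (prod_decode n)))" for n
  have fin: "finite (Jset L)"
  proof -
    have "{(x,y). x < y \<and> y \<le> L} \<subseteq> {..L} \<times> {..L}" by auto
    hence "finite {(x::nat,y). x < y \<and> y \<le> L}" by (rule finite_subset) simp
    thus ?thesis unfolding Jset_def by simp
  qed
  have c1: "\<forall>j\<in>Jset L. fst (R j) \<in> sets borel \<and> snd (R j) \<in> sets borel \<and> fst (R j) \<inter> snd (R j) = {}"
  proof
    fix j assume "j \<in> Jset L"
    then obtain x y where j: "j = prod_encode (x,y)" "x < y" "y \<le> L" unfolding Jset_def by auto
    have "P L x \<inter> P L y = {}" using P_uniq[of _ L x y] j by fastforce
    thus "fst (R j) \<in> sets borel \<and> snd (R j) \<in> sets borel \<and> fst (R j) \<inter> snd (R j) = {}"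
      unfolding R_def j by (simp add: P_borel)
  qed
  have c2: "disjoint_family_on (\<lambda>j. sym_rect (R j)) (Jset L)"
    unfolding disjoint_family_on_def
  proof (intro ballI impI)
    fix j j' assume jj: "j \<in> Jset L" "j' \<in> Jset L" "j \<noteq> j'"
    obtain x y where j: "j = prod_encode (x,y)" "x < y" "y \<le> L" using jj(1) unfolding Jset_def by auto
    obtain x' y' where j': "j' = prod_encode (x',y')" "x' < y'" "y' \<le> L" using jj(2) unfolding Jset_def by auto
    have ne: "(x,y) \<noteq> (x',y')" using jj(3) j j' by auto
    show "sym_rect (R j) \<inter> sym_rect (R j') = {}"
    proof (rule ccontr)
      assume "sym_rect (R j) \<inter> sym_rect (R j') \<noteq> {}"
      then obtain u v where uv: "(u,v) \<in> sym_rect (R j)" "(u,v) \<in> sym_rect (R j')" by auto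
      have U: "\<And>p q. u \<in> P L p \<Longrightarrow> u \<in> P L q \<Longrightarrow> p \<le> L \<Longrightarrow> q \<le> L \<Longrightarrow> p = q"
        using P_uniq by blast
      have V: "\<And>p q. v \<in> P L p \<Longrightarrow> v \<in> P L q \<Longrightarrow> p \<le> L \<Longrightarrow> q \<le> L \<Longrightarrow> p = q"
        using P_uniq by blast
      have "(u \<in> P L x \<and> v \<in> P L y) \<or> (u \<in> P L y \<and> v \<in> P L x)"
        using uv(1) unfolding R_def sym_rect_def j by auto
      moreover have "(u \<in> P L x' \<and> v \<in> P L y') \<or> (u \<in> P L y' \<and> v \<in> P L x')"
        using uv(2) unfolding R_def sym_rect_def j' by auto
      ultimately show False
        using U V j j' ne by (metis less_imp_le_nat order.strict_trans2 less_irrefl order.trans)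
    qed
  qed
  have "prob_space.indep_events M (\<lambda>j. {\<omega> \<in> space M. edge_between (E \<omega>) (fst (R j)) (snd (R j))}) (Jset L)"
    using LEP fin c1 c2 unfolding long_edge_process_def by blast
  moreover have "(\<lambda>j. {\<omega> \<in> space M. edge_between (E \<omega>) (fst (R j)) (snd (R j))}) = A L"
    unfolding A_def R_def by auto
  ultimately show ?thesis by simp
qed

lemma ev_atoms:
  assumes "X \<subseteq> {..L}" "Y \<subseteq> {..L}" "\<forall>x\<in>X. \<forall>y\<in>Y. x < y"
  shows "{\<omega>\<in>space M. edge_between (E \<omega>) (\<Union>x\<in>X. P L x) (\<Union>y\<in>Y. P L y)} = (\<Union>p\<in>X\<times>Y. A L (prod_encode p))"
  unfolding A_def edge_UN by (auto; blast)

lemma ev_sigma: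
  assumes "finite X" "finite Y" "X \<subseteq> {..L}" "Y \<subseteq> {..L}" "\<forall>x\<in>X. \<forall>y\<in>Y. x < y"
    and "prod_encode ` (X \<times> Y) \<subseteq> G"
  shows "{\<omega>\<in>space M. edge_between (E \<omega>) (\<Union>x\<in>X. P L x) (\<Union>y\<in>Y. P L y)} \<in> sigma_sets (space M) (A L ` G)"
proof -
  interpret sa: sigma_algebra "space M" "sigma_sets (space M) (A L ` G)"
    by (rule sigma_algebra_sigma_sets) (auto simp: A_def)
  have b: "A L (prod_encode p) \<in> sigma_sets (space M) (A L ` G)" if "p \<in> X\<times>Y" for p
    using assms(6) that by (intro sigma_sets.Basic) blast
  have "(\<Union>p\<in>X\<times>Y. A L (prod_encode p)) \<in> sigma_sets (space M) (A L ` G)"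
    using assms(1,2) b by (intro sa.finite_UN) auto
  thus ?thesis using ev_atoms[OF assms(3-5)] by simp
qed

end

context lrp_setup begin

lemma Ev_sets: "Ev i \<in> sets M"
  unfolding Ev_def by (rule edge_meas) auto

lemma Ev_atoms: assumes "1 \<le> i" "i \<le> m"
  shows "Ev i = {\<omega>\<in>space M. edge_between (E \<omega>) (\<Union>x\<in>{..<2*i-1}. P (2*m) x) (\<Union>y\<in>{2*i..2*m}. P (2*m) y)}"
proof -
  have "ball 0 (a i) = (\<Union>x\<in>{..<2*i-1}. P (2*m) x)"
    using ball_union[of "2*i-1" "2*m"] b_odd[of i] assms by simp
  moreover have "-ball 0 (r i) = (\<Union>y\<in>{2*i..2*m}. P (2*m) y)"
    using cball_union[of "2*i" "2*m"] b_even[of i] assms by simp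
  ultimately show ?thesis unfolding Ev_def by simp
qed

lemma Z_prob:
  assumes m: "1 \<le> m" and j: "1 \<le> j" "j \<le> m"
  defines "e \<equiv> (if j < m then 2*j else 2*m-1)"
  shows "measure M {\<omega>\<in>space M. edge_between (E \<omega>) (\<Union>x\<in>{2*j-2..<e}. P (2*m) x) (P (2*m) (2*m))}
      \<le> (if j < m then 2 * Cst \<beta> DIM('a) (1/2) / N^(m-j) else 1 - exp (- Cst \<beta> DIM('a) (15/16)))"
proof -
  define L where "L = 2*m"
  define U where "U = (\<Union>x\<in>{2*j-2..<e}. P L x)"
  have eL: "e \<le> L" unfolding e_def L_def by auto
  have Usub: "U \<subseteq> ball 0 (b e)"
  proof -
    have "P L x \<subseteq> ball 0 (b e)" if "x \<in> {2*j-2..<e}" for x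
    proof -
      have "x < L" "Suc x \<le> e" using that eL by auto
      thus ?thesis using P_sub[of x L] b_mono[of "Suc x" e] by auto
    qed
    thus ?thesis unfolding U_def by blast
  qed
  have PL: "P L L = -ball 0 (r m)" unfolding P_def L_def using b_even[of m] by simp
  have Ub: "U \<in> sets borel" unfolding U_def by (intro sets.finite_UN) (auto simp: P_borel)
  have PLb: "P L L \<in> sets borel" by (rule P_borel)
  have bL: "b e \<le> r m" using b_mono[OF eL] b_even[of m] unfolding L_def by simp
  have disj: "U \<inter> P L L = {}" using Usub bL PL by auto
  have rm: "r m > 0" using r_pos m by simp
  show ?thesis
  proof (cases "j < m")
    case True
    have be: "b e = r j" unfolding e_def using True b_even[of j] by simp
    have rj0: "0 \<le> r j" by (rule r_nonneg)
    have rjh: "r j \<le> (1/2) * r m" using rj_half j True by simp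
    have I: "lrp_intensity \<beta> U (P L L) \<le> ennreal (Cst \<beta> DIM('a) (1/2) * (r j / r m)^DIM('a))"
      by (rule intensity_bound2) (use \<beta> rm rj0 rjh Usub be PL in auto)
    have rho: "0 \<le> r j / r m" "r j / r m \<le> 1" using rj0 rm rjh by (auto simp: field_simps)
    have "(r j / r m)^DIM('a) \<le> (r j / r m)^1"
      by (rule power_decreasing) (use rho in \<open>auto simp: DIM_positive Suc_leI\<close>)
    also have "\<dots> \<le> 2 / N^(m-j)" using ratio j True by simp
    finally have "Cst \<beta> DIM('a) (1/2) * (r j / r m)^DIM('a) \<le> Cst \<beta> DIM('a) (1/2) * (2 / N^(m-j))"
      using Cst_nonneg[OF \<beta>] by (intro mult_left_mono) auto
    hence I2: "lrp_intensity \<beta> U (P L L) \<le> ennreal (2 * Cst \<beta> DIM('a) (1/2) / N^(m-j))"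
      using I by (metis (no_types, lifting) ennreal_leI order.trans times_divide_eq_right mult.commute mult.left_commute)
    have x0: "0 \<le> 2 * Cst \<beta> DIM('a) (1/2) / N^(m-j)" using Cst_nonneg[OF \<beta>] N4 by simp
    have "measure M {\<omega>\<in>space M. edge_between (E \<omega>) U (P L L)} \<le> 1 - exp (- (2 * Cst \<beta> DIM('a) (1/2) / N^(m-j)))"
      by (rule prob_edge_le[OF LEP Ub PLb disj I2 x0])
    also have "\<dots> \<le> 2 * Cst \<beta> DIM('a) (1/2) / N^(m-j)" by (rule one_minus_exp_le[OF x0])
    finally show ?thesis using True unfolding U_def L_def by simp
  next
    case False
    hence jm: "j = m" using j by simp
    have be: "b e = a m" unfolding e_def using jm b_odd[of m] m by simp
    have am0: "0 \<le> a m" using a_bounds[of m] r_nonneg[of "m-1"] m by simp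
    have amr: "a m \<le> (15/16) * r m" using am m by simp
    have I: "lrp_intensity \<beta> U (P L L) \<le> ennreal (Cst \<beta> DIM('a) (15/16) * (a m / r m)^DIM('a))"
      by (rule intensity_bound2) (use \<beta> rm am0 amr Usub be PL in auto)
    have rho: "0 \<le> a m / r m" "a m / r m \<le> 1" using am0 rm amr by (auto simp: field_simps)
    have "(a m / r m)^DIM('a) \<le> 1" using rho by (simp add: power_le_one)
    hence "Cst \<beta> DIM('a) (15/16) * (a m / r m)^DIM('a) \<le> Cst \<beta> DIM('a) (15/16)"
      using Cst_nonneg[OF \<beta>] by (simp add: mult_left_le)
    hence I2: "lrp_intensity \<beta> U (P L L) \<le> ennreal (Cst \<beta> DIM('a) (15/16))"
      using I by (meson ennreal_leI order.trans)
    have "measure M {\<omega>\<in>space M. edge_between (E \<omega>) U (P L L)} \<le> 1 - exp (- Cst \<beta> DIM('a) (15/16))"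
      by (rule prob_edge_le[OF LEP Ub PLb disj I2 Cst_nonneg[OF \<beta>]])
    thus ?thesis using False unfolding U_def L_def by simp
  qed
qed

end

context lrp_setup begin

lemma core: "finite S \<Longrightarrow> S \<noteq> {} \<Longrightarrow> 0 \<notin> S \<Longrightarrow> measure M (\<Inter>i\<in>S. Ev i) \<le> \<kappa> ^ card S"
proof (induction "Max S" arbitrary: S rule: less_induct)
  case less
  interpret prob_space M by (rule prob)
  define m where "m = Max S"
  define L where "L = 2*m"
  have mS: "m \<in> S" unfolding m_def using less.prems by simp
  have Sle: "\<And>i. i \<in> S \<Longrightarrow> 1 \<le> i \<and> i \<le> m"
    unfolding m_def using less.prems by (metis Max_ge less_one not_le)
  have m1: "1 \<le> m" using Sle mS by simp
  define e where "e j = (if j < m then 2*j else 2*m-1)" for j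
  define U where "U j = (\<Union>x\<in>{2*j-2..<e j}. P L x)" for j
  define Z where "Z j = {\<omega>\<in>space M. edge_between (E \<omega>) (U j) (P L L)}" for j
  define W where "W = (\<Inter>i\<in>S. Ev i)"
  have Zsets: "Z j \<in> events" for j
    unfolding Z_def U_def by (rule edge_meas) (auto intro!: sets.finite_UN simp: P_borel)
  have Wsets: "W \<in> events" unfolding W_def using less.prems by (intro sets.finite_INT) (auto simp: Ev_sets)
  have cover: "W \<subseteq> (\<Union>j\<in>{1..m}. W \<inter> Z j)"
  proof
    fix \<omega> assume w: "\<omega> \<in> W"
    hence "\<omega> \<in> Ev m" using mS unfolding W_def by auto
    hence "\<omega> \<in> space M" "edge_between (E \<omega>) (\<Union>x\<in>{..<2*m-1}. P L x) (\<Union>y\<in>{2*m..2*m}. P L y)"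
      using Ev_atoms[of m m] m1 unfolding L_def by auto
    then obtain x where x: "x < 2*m-1" "edge_between (E \<omega>) (P L x) (P L L)"
      unfolding edge_UN L_def by auto
    define j where "j = x div 2 + 1"
    have j: "j \<in> {1..m}" unfolding j_def using x(1) by auto
    have "x \<in> {2*j-2..<e j}" unfolding j_def e_def using x(1) by auto
    hence "P L x \<subseteq> U j" unfolding U_def by auto
    hence "\<omega> \<in> Z j" unfolding Z_def using x(2) \<open>\<omega> \<in> space M\<close> by (auto intro: edge_mono)
    thus "\<omega> \<in> (\<Union>j\<in>{1..m}. W \<inter> Z j)" using w j by auto
  qed
  have piece: "prob (W \<inter> Z j) \<le> prob (Z j) * \<kappa> ^ card (S \<inter> {..<j})" if j: "j \<in> {1..m}" for j
  proof (cases "S \<inter> {..<j} = {}")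
    case True
    have "prob (W \<inter> Z j) \<le> prob (Z j)" by (rule finite_measure_mono) (use Zsets in auto)
    thus ?thesis using True by simp
  next
    case False
    define S' where "S' = S \<inter> {..<j}"
    define Y where "Y = (\<Inter>i\<in>S'. Ev i)"
    have S'ne: "S' \<noteq> {}" "finite S'" "0 \<notin> S'" using False less.prems unfolding S'_def by auto
    have "Max S' < j" using S'ne unfolding S'_def by auto
    hence lt: "Max S' < Max S" using j unfolding m_def by simp
    have IH: "prob Y \<le> \<kappa> ^ card S'" unfolding Y_def by (rule less.hyps[OF lt S'ne(2) S'ne(1) S'ne(3)])
    have sub: "W \<inter> Z j \<subseteq> Z j \<inter> Y" unfolding W_def Y_def S'_def by auto
    have Ysets: "Y \<in> events" unfolding Y_def using S'ne by (intro sets.finite_INT) (auto simp: Ev_sets)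
    define J1 where "J1 = {n \<in> Jset L. 2*j-2 \<le> fst (prod_decode n)}"
    define J2 where "J2 = {n \<in> Jset L. fst (prod_decode n) < 2*j-2}"
    have ZS: "Z j \<in> sigma_sets (space M) (A L ` J1)"
    proof -
      have eL: "e j \<le> L" "e j < L" unfolding e_def L_def using m1 by auto
      have "Z j = {\<omega>\<in>space M. edge_between (E \<omega>) (\<Union>x\<in>{2*j-2..<e j}. P L x) (\<Union>y\<in>{L}. P L y)}"
        unfolding Z_def U_def by simp
      also have "\<dots> \<in> sigma_sets (space M) (A L ` J1)"
      proof (rule ev_sigma)
        show "prod_encode ` ({2*j-2..<e j} \<times> {L}) \<subseteq> J1"
          unfolding J1_def Jset_def using eL by auto
      qed (use eL in auto)
      finally show ?thesis .
    qed
    have YS: "Y \<in> sigma_sets (space M) (A L ` J2)"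
    proof -
      interpret sa: sigma_algebra "space M" "sigma_sets (space M) (A L ` J2)"
        by (rule sigma_algebra_sigma_sets) (auto simp: A_def)
      have "Ev i \<in> sigma_sets (space M) (A L ` J2)" if i: "i \<in> S'" for i
      proof -
        have i1: "1 \<le> i" "i \<le> m" "i < j" using i Sle unfolding S'_def by auto
        have "Ev i = {\<omega>\<in>space M. edge_between (E \<omega>) (\<Union>x\<in>{..<2*i-1}. P L x) (\<Union>y\<in>{2*i..L}. P L y)}"
          using Ev_atoms[OF i1(1,2)] unfolding L_def by simp
        also have "\<dots> \<in> sigma_sets (space M) (A L ` J2)"
        proof (rule ev_sigma)
          show "prod_encode ` ({..<2*i-1} \<times> {2*i..L}) \<subseteq> J2"
            unfolding J2_def Jset_def using i1 by auto
        qed (use i1 in \<open>auto simp: L_def\<close>)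
        finally show ?thesis .
      qed
      thus ?thesis unfolding Y_def using S'ne by (intro sa.finite_INT) auto
    qed
    have "prob (W \<inter> Z j) \<le> prob (Z j \<inter> Y)" by (rule finite_measure_mono[OF sub]) (use Zsets Ysets in auto)
    also have "\<dots> = prob (Z j) * prob Y"
      by (rule indep_groups[OF prob A_indep _ _ _ ZS YS]) (auto simp: J1_def J2_def)
    also have "\<dots> \<le> prob (Z j) * \<kappa> ^ card S'" using IH by (intro mult_left_mono) auto
    finally show ?thesis unfolding S'_def .
  qed
  have "prob W \<le> prob (\<Union>j\<in>{1..m}. W \<inter> Z j)"
    by (rule finite_measure_mono[OF cover]) (use Wsets Zsets in auto)
  also have "\<dots> \<le> (\<Sum>j\<in>{1..m}. prob (W \<inter> Z j))"
    by (rule measure_UNION_le) (use Wsets Zsets in auto)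
  also have "\<dots> \<le> (\<Sum>j\<in>{1..m}. prob (Z j) * \<kappa> ^ card (S \<inter> {..<j}))"
    by (rule sum_mono) (rule piece)
  also have "\<dots> \<le> \<kappa> ^ card S"
  proof (rule sum_bound[where q = "1 - exp (- Cst \<beta> DIM('a) (15/16))" and A = "2 * Cst \<beta> DIM('a) (1/2)" and N = N and m = m])
    show "prob (Z m) \<le> 1 - exp (- Cst \<beta> DIM('a) (15/16))"
      using Z_prob[of m m] m1 unfolding Z_def U_def e_def L_def by simp
    show "prob (Z j) \<le> 2 * Cst \<beta> DIM('a) (1/2) / N ^ (m - j)" if "1 \<le> j" "j < m" for j
      using Z_prob[of m j] m1 that unfolding Z_def U_def e_def L_def by simp
    show "card S \<le> card (S \<inter> {..<j}) + (m + 1 - j)" if "1 \<le> j" "j \<le> m" for j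
    proof -
      have "S \<subseteq> (S \<inter> {..<j}) \<union> {j..m}" using Sle by auto
      hence "card S \<le> card ((S \<inter> {..<j}) \<union> {j..m})" by (intro card_mono) auto
      also have "\<dots> \<le> card (S \<inter> {..<j}) + card {j..m}" by (rule card_Un_le)
      finally show ?thesis by simp
    qed
    show "0 \<le> 2 * Cst \<beta> DIM('a) (1/2)" using Cst_nonneg[OF \<beta>] by simp
  qed (use k m1 Nk main N4 in auto)
  finally show ?case unfolding W_def .
qed

end

lemma main_cond:
  fixes q A N :: real
  assumes q: "0 \<le> q" "q < 1" and A: "A \<ge> 0" and N: "N \<ge> max 4 (8*A*(1+q)/(1-q))"
  shows "q/((1+q)/2) + 2*A/(N*((1+q)/2)^2) \<le> 1" and "N*((1+q)/2) \<ge> 2"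
proof -
  define k where "k = (1+q)/2"
  have k: "k \<ge> 1/2" "k > 0" unfolding k_def using q by auto
  have N4: "N \<ge> 4" using N by simp
  have N8: "N \<ge> 8*A*(1+q)/(1-q)" using N by simp
  have k2: "k^2 \<ge> 1/4" using k power_mono[of "1/2" k 2] by (simp add: power2_eq_square)
  have "2*A/(N*k^2) \<le> 2*A/(N*(1/4))"
    using A N4 k2 by (intro divide_left_mono mult_left_mono mult_pos_pos) auto
  also have "\<dots> = 8*A/N" by simp
  also have "8*A/N \<le> (1-q)/(1+q)"
  proof -
    have "8*A*(1+q)/(1-q) \<le> N" by (rule N8)
    hence "8*A*(1+q) \<le> N*(1-q)" using q by (simp add: field_simps)
    moreover have "0 \<le> q*q" using q by simp
    hence "1 + (q*q + q*2) \<noteq> 0" using q by linarith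
    moreover have "0 < 1+q" using q by simp
    ultimately show ?thesis using q N4 by (simp add: field_simps)
  qed
  finally have t2: "2*A/(N*k^2) \<le> (1-q)/(1+q)" .
  have t1: "q/k = 2*q/(1+q)" unfolding k_def by simp
  have "q/k + 2*A/(N*k^2) \<le> 2*q/(1+q) + (1-q)/(1+q)" using t1 t2 by simp
  also have "\<dots> = (2*q + (1-q))/(1+q)" by (rule add_divide_distrib[symmetric])
  also have "\<dots> = 1" using q by simp
  finally show "q/((1+q)/2) + 2*A/(N*((1+q)/2)^2) \<le> 1" unfolding k_def .
  have "4 * (1/2) \<le> N * k" by (rule mult_mono) (use N4 k in auto)
  thus "N*((1+q)/2) \<ge> 2" unfolding k_def by simp
qed

lemma Npar_large:
  assumes th: "0 < \<theta>" "\<theta> < 1" and c1: "c1 > 0" and N0: "N0 > 0"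
  shows "\<exists>\<epsilon>0>0. \<forall>\<epsilon>. 0 < \<epsilon> \<and> \<epsilon> < 1 \<and> \<epsilon> < \<epsilon>0 \<longrightarrow> N0 \<le> Npar \<theta> c1 \<epsilon>"
proof -
  define B where "B = \<bar>(1/\<theta>) * ln c1 - (1+1/\<theta>) * ln 4\<bar>"
  define T where "T = max 0 (ln N0)"
  define e0 where "e0 = exp (-((B+T+1)^2))"
  have B0: "B \<ge> 0" and T0: "T \<ge> 0" unfolding B_def T_def by auto
  show ?thesis
  proof (intro exI[of _ e0] conjI allI impI)
    show "e0 > 0" unfolding e0_def by simp
    fix \<epsilon> :: real assume e: "0 < \<epsilon> \<and> \<epsilon> < 1 \<and> \<epsilon> < e0"
    define Le where "Le = ln (1/\<epsilon>)"
    have Le': "Le = - ln \<epsilon>" unfolding Le_def using e by (simp add: ln_div)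
    have "ln \<epsilon> < ln e0" using e by (subst ln_less_cancel_iff) (auto simp: e0_def)
    hence LeB: "(B+T+1)^2 < Le" unfolding Le' e0_def by simp
    have x1: "1 \<le> B+T+1" using B0 T0 by simp
    have "1*1 \<le> (B+T+1)*(B+T+1)" by (rule mult_mono) (use x1 in auto)
    hence "1 \<le> (B+T+1)^2" by (simp add: power2_eq_square)
    hence Le1: "Le > 1" using LeB by simp
    define s where "s = sqrt Le"
    have sgt: "B+T+1 < s" unfolding s_def using LeB by (simp add: real_less_rsqrt)
    have s1: "s \<ge> 1" using sgt B0 T0 by simp
    have ss: "s * s = Le" unfolding s_def using Le1 by simp
    have K: "Kpar \<epsilon> = s" unfolding Kpar_def s_def Le_def ..
    define X where "X = 4 powr (-(1+1/\<theta>)) * (c1/\<epsilon>) powr (1/\<theta>)"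
    have Xpos: "X > 0" unfolding X_def using c1 e by simp
    have lnX: "ln X = -(1+1/\<theta>) * ln 4 + (1/\<theta>) * (ln c1 + Le)"
      unfolding X_def Le' using c1 e by (simp add: ln_mult ln_powr ln_div)
    have "Le \<le> (1/\<theta>) * Le" using th Le1 by (simp add: field_simps)
    hence lnXB: "Le - B \<le> ln X" unfolding lnX B_def by (simp add: algebra_simps)
    have "(Le - B) / s \<le> ln X / s" using lnXB s1 by (simp add: divide_right_mono)
    moreover have "(Le - B) / s = s - B / s" using s1 ss by (simp add: field_simps)
    moreover have "B / s \<le> B" using B0 s1 mult_left_mono[of 1 s B] by (simp add: divide_le_eq)
    ultimately have "s - B \<le> ln X / s" by linarith
    hence lt: "T < ln X / s" using sgt by linarith
    have "Npar \<theta> c1 \<epsilon> = exp (ln X / s)"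
      unfolding Npar_def K X_def[symmetric] using Xpos by (simp add: powr_def)
    moreover have "N0 = exp (ln N0)" using N0 by simp
    moreover have "ln N0 \<le> T" unfolding T_def by simp
    ultimately show "N0 \<le> Npar \<theta> c1 \<epsilon>" using lt by (metis exp_le_cancel_iff order.trans less_imp_le)
  qed
qed

theorem lemma3p4:
  fixes \<beta> \<theta> c1 :: real
  assumes "\<beta> > 0" and "0 < \<theta>" and "\<theta> < 1" and "c1 > 0"
  shows "\<exists>\<kappa>::real. 0 < \<kappa> \<and> \<kappa> < 1 \<and>
    (\<exists>\<epsilon>0>0. \<forall>\<epsilon>. 0 < \<epsilon> \<and> \<epsilon> < 1 \<and> \<epsilon> < \<epsilon>0 \<longrightarrow>
      (\<forall>(M::'w measure) (E::'w \<Rightarrow> ('a::euclidean_space \<times> 'a) set).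
         long_edge_process M \<beta> E \<longrightarrow>
         (\<forall>S. S \<noteq> {} \<and> S \<subseteq> {i. 1 \<le> i \<and> real i \<le> Kpar \<epsilon>} \<longrightarrow>
            measure M (\<Inter>i\<in>S. E1event M E \<theta> c1 \<epsilon> i) \<le> \<kappa> ^ card S)))"
proof -
  define C15 where "C15 = Cst \<beta> DIM('a) (15/16)"
  define C2 where "C2 = Cst \<beta> DIM('a) (1/2)"
  define q0 where "q0 = 1 - exp (- C15)"
  define \<kappa> where "\<kappa> = (1+q0)/2"
  define Ac where "Ac = 2*C2"
  define N0 where "N0 = max 4 (8*Ac*(1+q0)/(1-q0))"
  have C15: "C15 \<ge> 0" unfolding C15_def by (rule Cst_nonneg[OF assms(1)])
  have C2: "C2 \<ge> 0" unfolding C2_def by (rule Cst_nonneg[OF assms(1)])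
  have q0: "0 \<le> q0" "q0 < 1" unfolding q0_def using C15 by auto
  have Ac: "Ac \<ge> 0" unfolding Ac_def using C2 by simp
  have k: "0 < \<kappa>" "\<kappa> < 1" unfolding \<kappa>_def using q0 by auto
  have N0: "N0 > 0" "N0 \<ge> 4" unfolding N0_def by auto
  obtain e0 where e0: "e0 > 0" "\<forall>\<epsilon>. 0 < \<epsilon> \<and> \<epsilon> < 1 \<and> \<epsilon> < e0 \<longrightarrow> N0 \<le> Npar \<theta> c1 \<epsilon>"
    using Npar_large[OF assms(2,3,4) N0(1)] by blast
  have key: "\<forall>\<epsilon>. 0 < \<epsilon> \<and> \<epsilon> < 1 \<and> \<epsilon> < e0 \<longrightarrow>
      (\<forall>(M::'w measure) (E::'w \<Rightarrow> ('a::euclidean_space \<times> 'a) set).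
         long_edge_process M \<beta> E \<longrightarrow>
         (\<forall>S. S \<noteq> {} \<and> S \<subseteq> {i. 1 \<le> i \<and> real i \<le> Kpar \<epsilon>} \<longrightarrow>
            measure M (\<Inter>i\<in>S. E1event M E \<theta> c1 \<epsilon> i) \<le> \<kappa> ^ card S))"
  proof (intro allI impI)
    fix \<epsilon> :: real and M :: "'w measure" and E :: "'w \<Rightarrow> ('a \<times> 'a) set" and S :: "nat set"
    assume e: "0 < \<epsilon> \<and> \<epsilon> < 1 \<and> \<epsilon> < e0" and LEP: "long_edge_process M \<beta> E"
      and S: "S \<noteq> {} \<and> S \<subseteq> {i. 1 \<le> i \<and> real i \<le> Kpar \<epsilon>}"
    have NN: "N0 \<le> Npar \<theta> c1 \<epsilon>" using e0 e by blast
    have N4: "Npar \<theta> c1 \<epsilon> \<ge> 4" using NN N0 by simp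
    have Nb: "Npar \<theta> c1 \<epsilon> \<ge> max 4 (8*Ac*(1+q0)/(1-q0))" using NN unfolding N0_def .
    have Mpos: "\<And>i. 1 \<le> i \<Longrightarrow> Mpar \<theta> c1 \<epsilon> i > 0"
      unfolding Mpar_def using e assms N4 by simp
    have r0: "rpar \<theta> c1 \<epsilon> 0 = 0" unfolding rpar_def by simp
    have rS: "\<And>i. rpar \<theta> c1 \<epsilon> (Suc i) = rpar \<theta> c1 \<epsilon> i + Mpar \<theta> c1 \<epsilon> (Suc i)"
      unfolding rpar_def by simp
    have MS: "\<And>i. 1 \<le> i \<Longrightarrow> Mpar \<theta> c1 \<epsilon> (Suc i) = Npar \<theta> c1 \<epsilon> * Mpar \<theta> c1 \<epsilon> i"
    proof -
      fix i :: nat assume "1 \<le> i"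
      then obtain j where "i = Suc j" by (cases i) auto
      thus "Mpar \<theta> c1 \<epsilon> (Suc i) = Npar \<theta> c1 \<epsilon> * Mpar \<theta> c1 \<epsilon> i" unfolding Mpar_def by simp
    qed
    have mc: "(1 - exp (- Cst \<beta> DIM('a) (15/16)))/\<kappa> + 2*(2*Cst \<beta> DIM('a) (1/2))/(Npar \<theta> c1 \<epsilon>*\<kappa>^2) \<le> 1"
      using main_cond(1)[OF q0 Ac Nb] unfolding \<kappa>_def q0_def C15_def Ac_def C2_def .
    have nk: "Npar \<theta> c1 \<epsilon> * \<kappa> \<ge> 2"
      using main_cond(2)[OF q0 Ac Nb] unfolding \<kappa>_def .
    interpret L: lrp_setup M E \<beta> "Mpar \<theta> c1 \<epsilon>" "rpar \<theta> c1 \<epsilon>" "Npar \<theta> c1 \<epsilon>" \<kappa>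
      by (rule lrp_setup.intro[OF LEP assms(1) Mpos r0 rS MS N4 k mc nk])
    have eq: "E1event M E \<theta> c1 \<epsilon> i = L.Ev i" for i
      unfolding E1event_def L.Ev_def L.a_def by simp
    have fin: "finite S"
    proof (rule finite_subset)
      show "S \<subseteq> {..nat \<lceil>Kpar \<epsilon>\<rceil>}"
      proof
        fix i assume "i \<in> S"
        hence "real i \<le> Kpar \<epsilon>" using S by auto
        hence "real i \<le> real (nat \<lceil>Kpar \<epsilon>\<rceil>)" by linarith
        thus "i \<in> {..nat \<lceil>Kpar \<epsilon>\<rceil>}" by simp
      qed
    qed simp
    have z: "0 \<notin> S" using S by auto
    show "measure M (\<Inter>i\<in>S. E1event M E \<theta> c1 \<epsilon> i) \<le> \<kappa> ^ card S"
      using L.core[OF fin _ z] S unfolding eq by simp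
  qed
  show ?thesis using k e0(1) key by blast
qed

end
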